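(* $\mathcal{E}_0\neq\mathcal{E}_1$ and $\mathcal{E}_1=\mathcal{E}_\infty$. Consequently $\mathcal{E}_d=\mathcal{E}_1$ for all $d\ge 1$.
   Context: Fix an infinite set $\mathcal{A}$ (of actions) and a finite non-empty set $T$ (of types). A typed temporal graph is a triple $(G,t,\tau)$ where $G$ is a directed graph with node set $\mathrm{nodes}(G)\subseteq\mathcal{A}$ and edge set $\mathrm{edges}(G)\subseteq\mathrm{nodes}(G)\times\mathrm{nodes}(G)$ (no rootedness or acyclicity assumed), $t\colon\mathrm{nodes}(G)\to\mathbb{R}$ and $\tau\colon\mathrm{nodes}(G)\to T$. Write $(G,t,\tau)\preceq(G',t',\tau')$ iff $\mathrm{nodes}(G)\subseteq\mathrm{nodes}(G')$, $\mathrm{edges}(G)\subseteq\mathrm{edges}(G')$, $t'|_{\mathrm{nodes}(G)}=t$ and $\tau'|_{\mathrm{nodes}(G)}=\tau$. Let $\mathcal{G}$ be the set of all finite sequences $(G_k)_{k=0}^n$ ($n\ge 0$) of typed temporal graphs $(G_k,t_k,\tau_k)$. A typed temporal graph is $\mathcal{A}$-trivial iff its node set is $\{r\}$ for some $r\in\mathcal{A}$ and it has no edges. Direct emission: $G'$ is obtained from $G$ by direct emissions iff $G\preceq G'$ and there exist a finite non-empty set $B\subseteq\mathcal{A}$ with $B\cap\mathrm{nodes}(G)=\emptyset$ and $p\in\mathrm{nodes}(G)$ such that $\mathrm{nodes}(G')=\mathrm{nodes}(G)\cup B$, $\mathrm{edges}(G')=\mathrm{edges}(G)\cup\{(p,b):b\in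 B\}$, and $t(p)<t'(b)$ for all $b\in B$. Invocation: for $\mathcal{E}\subseteq\mathcal{G}$, $G'$ is obtained from $G$ by $\mathcal{E}$-invocation iff there exist $p\in\mathrm{nodes}(G)$, a sequence $(H_i,t^H_i,\tau^H_i)_{i=0}^m\in\mathcal{E}$ with $\mathrm{nodes}(H_i)\cap\mathrm{nodes}(G)=\emptyset$ for all $i$, and a node $q_m\in\mathrm{nodes}(H_m)$ of in-degree zero in $H_m$, such that $\mathrm{nodes}(G')=\mathrm{nodes}(G)\cup\mathrm{nodes}(H_m)$, $\mathrm{edges}(G')=\mathrm{edges}(G)\cup\mathrm{edges}(H_m)\cup\{(p,q_m)\}$, $t'=t\sqcup t^H_m$, $\tau'=\tau\sqcup\tau^H_m$, and $t(p)<t^H_m(q_m)$ (here $f\sqcup g$ denotes the common extension of two maps with disjoint domains). Define $\varphi(\mathcal{E})$, for $\mathcal{E}\subseteq\mathcal{G}$, as the set of all $(G_k)_{k=0}^n\in\mathcal{G}$ such that $G_0$ is $\mathcal{A}$-trivial and, for each $0\le k<n$, $G_{k+1}$ is obtained from $G_k$ either by direct emissions or by $\mathcal{E}$-invocation. Define $\mathcal{E}_0=\varphi(\emptyset)$, $\mathcal{E}_{d+1}=\varphi(\mathcal{E}_d)$ for $d\in\mathbb{N}$, and $\mathcal{E}_\infty=\bigcup_{d\in\mathbb{N}}\mathcal{E}_d$. *)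

theory Defs
  imports Complex_Main
begin

text \<open>The timing and typing maps are total HOL functions; to represent maps defined
  only on the node set, well-formed graphs are required to be extensional
  (value undefined outside the node set), so that each mathematical graph has
  a unique representation.\<close>

record ('a, 't) tgraph =
  nodes :: "'a set"
  edges :: "('a \<times> 'a) set"
  ttime :: "'a \<Rightarrow> real"
  ttype :: "'a \<Rightarrow> 't"

definition wf_tg :: "('a, 't) tgraph \<Rightarrow> bool" where
  "wf_tg G \<longleftrightarrow> edges G \<subseteq> nodes G \<times> nodes G
     \<and> (\<forall>x. x \<notin> nodes G \<longrightarrow> ttime G x = undefined \<and> ttype G x = undefined)"

definition tg_le :: "('a, 't) tgraph \<Rightarrow> ('a, 't) tgraph \<Rightarrow> bool" where
  "tg_le G G' \<longleftrightarrow> nodes G \<subseteq> nodes G' \<and> edges G \<subseteq> edges G'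
     \<and> (\<forall>x\<in>nodes G. ttime G' x = ttime G x \<and> ttype G' x = ttype G x)"

definition GG :: "('a, 't) tgraph list set" where
  "GG = {Gs. Gs \<noteq> [] \<and> (\<forall>G\<in>set Gs. wf_tg G)}"

definition trivial_tg :: "('a, 't) tgraph \<Rightarrow> bool" where
  "trivial_tg G \<longleftrightarrow> (\<exists>r. nodes G = {r} \<and> edges G = {})"

definition direct_emission :: "('a, 't) tgraph \<Rightarrow> ('a, 't) tgraph \<Rightarrow> bool" where
  "direct_emission G G' \<longleftrightarrow> tg_le G G' \<and>
     (\<exists>B p. finite B \<and> B \<noteq> {} \<and> B \<inter> nodes G = {} \<and> p \<in> nodes G
        \<and> nodes G' = nodes G \<union> B
        \<and> edges G' = edges G \<union> {(p, b) | b. b \<in> B}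
        \<and> (\<forall>b\<in>B. ttime G p < ttime G' b))"

definition invocation ::
  "('a, 't) tgraph list set \<Rightarrow> ('a, 't) tgraph \<Rightarrow> ('a, 't) tgraph \<Rightarrow> bool" where
  "invocation E G G' \<longleftrightarrow>
     (\<exists>p Hs q. p \<in> nodes G \<and> Hs \<in> E
        \<and> (\<forall>H\<in>set Hs. nodes H \<inter> nodes G = {})
        \<and> q \<in> nodes (last Hs) \<and> (\<forall>x. (x, q) \<notin> edges (last Hs))
        \<and> nodes G' = nodes G \<union> nodes (last Hs)
        \<and> edges G' = edges G \<union> edges (last Hs) \<union> {(p, q)}
        \<and> ttime G' = (\<lambda>x. if x \<in> nodes G then ttime G x else ttime (last Hs) x)
        \<and> ttype G' = (\<lambda>x. if x \<in> nodes G then ttype G x else ttype (last Hs) x)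
        \<and> ttime G p < ttime (last Hs) q)"

definition phi :: "('a, 't) tgraph list set \<Rightarrow> ('a, 't) tgraph list set" where
  "phi E = {Gs \<in> GG. trivial_tg (hd Gs) \<and>
     (\<forall>k. Suc k < length Gs \<longrightarrow>
        direct_emission (Gs ! k) (Gs ! Suc k) \<or> invocation E (Gs ! k) (Gs ! Suc k))}"

text \<open>E_d: E_0 = phi {}, E_{d+1} = phi E_d.\<close>
definition Ed :: "nat \<Rightarrow> ('a, 't) tgraph list set" where
  "Ed d = (phi ^^ Suc d) {}"

definition Einf :: "('a, 't) tgraph list set" where
  "Einf = (\<Union>d. Ed d)"

end

theory Submission
  imports Defs
begin

lemma tg_le_refl: "tg_le G G"
  by (simp add: tg_le_def)

lemma tg_le_trans: "tg_le A B \<Longrightarrow> tg_le B C \<Longrightarrow> tg_le A C"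
  unfolding tg_le_def by (metis subsetD subset_trans)

lemma step_le:
  assumes "direct_emission G G' \<or> invocation E G G'"
  shows "tg_le G G'"
  using assms unfolding direct_emission_def invocation_def tg_le_def by auto

lemma phi_le:
  assumes "Gs \<in> phi E" "j < length Gs" "i \<le> j"
  shows "tg_le (Gs!i) (Gs!j)"
  using assms(2,3)
proof (induction j)
  case 0
  then show ?case by (simp add: tg_le_refl)
next
  case (Suc j)
  show ?case
  proof (cases "i = Suc j")
    case True
    then show ?thesis by (simp add: tg_le_refl)
  next
    case False
    then have "tg_le (Gs!i) (Gs!j)" using Suc by simp
    moreover have "tg_le (Gs!j) (Gs!Suc j)"
      using assms(1) Suc.prems step_le unfolding phi_def by blast
    ultimately show ?thesis using tg_le_trans by blast
  qed
qed

lemma phi_single: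
  assumes "wf_tg G" "trivial_tg G"
  shows "[G] \<in> phi E"
  using assms unfolding phi_def GG_def by auto

lemma phi_snoc:
  assumes "Gs \<in> phi E" "wf_tg G"
    "direct_emission (last Gs) G \<or> invocation E (last Gs) G"
  shows "Gs @ [G] \<in> phi E"
proof -
  have ne: "Gs \<noteq> []" using assms(1) unfolding phi_def GG_def by auto
  have "\<forall>k. Suc k < length (Gs @ [G]) \<longrightarrow>
        direct_emission ((Gs @ [G]) ! k) ((Gs @ [G]) ! Suc k) \<or> invocation E ((Gs @ [G]) ! k) ((Gs @ [G]) ! Suc k)"
  proof (intro allI impI)
    fix k assume k: "Suc k < length (Gs @ [G])"
    show "direct_emission ((Gs @ [G]) ! k) ((Gs @ [G]) ! Suc k) \<or> invocation E ((Gs @ [G]) ! k) ((Gs @ [G]) ! Suc k)"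
    proof (cases "Suc k < length Gs")
      case True
      then show ?thesis using assms(1) unfolding phi_def by (simp add: nth_append)
    next
      case False
      then have "k = length Gs - 1" using k by simp
      then show ?thesis using assms(3) ne False by (simp add: nth_append last_conv_nth)
    qed
  qed
  then show ?thesis using assms ne unfolding phi_def GG_def by auto
qed

lemma phi_indeg:
  assumes "Gs \<in> phi {}" "nodes (hd Gs) = {r}" "k < length Gs"
  shows "r \<in> nodes (Gs!k) \<and> (\<forall>x\<in>nodes (Gs!k). x \<noteq> r \<longrightarrow> (\<exists>y. (y,x) \<in> edges (Gs!k)))"
  using assms(3)
proof (induction k)
  case 0
  then show ?case using assms(1,2) unfolding phi_def GG_def by (auto simp: hd_conv_nth)
next
  case (Suc k)
  then have IH: "r \<in> nodes (Gs!k) \<and> (\<forall>x\<in>nodes (Gs!k). x \<noteq> r \<longrightarrow> (\<exists>y. (y,x) \<in> edges (Gs!k)))"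
    by simp
  have "direct_emission (Gs!k) (Gs!Suc k)"
    using assms(1) Suc.prems unfolding phi_def invocation_def by auto
  then obtain B p where
    "nodes (Gs!Suc k) = nodes (Gs!k) \<union> B"
    "edges (Gs!Suc k) = edges (Gs!k) \<union> {(p, b) | b. b \<in> B}"
    unfolding direct_emission_def by blast
  then show ?case using IH by blast
qed


definition glue :: "('a,'t) tgraph \<Rightarrow> 'a \<Rightarrow> 'a \<Rightarrow> ('a,'t) tgraph \<Rightarrow> ('a,'t) tgraph" where
  "glue G p q K = \<lparr>nodes = nodes G \<union> nodes K, edges = edges G \<union> edges K \<union> {(p,q)},
     ttime = (\<lambda>x. if x \<in> nodes G then ttime G x else ttime K x),
     ttype = (\<lambda>x. if x \<in> nodes G then ttype G x else ttype K x)\<rparr>"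

lemma glue_wf:
  assumes "wf_tg G" "wf_tg K" "p \<in> nodes G" "q \<in> nodes K"
  shows "wf_tg (glue G p q K)"
  using assms unfolding wf_tg_def glue_def by auto

lemma glue_de:
  assumes "direct_emission K K'" "nodes K' \<inter> nodes G = {}"
  shows "direct_emission (glue G p q K) (glue G p q K')"
proof -
  obtain B p' where B: "finite B" "B \<noteq> {}" "B \<inter> nodes K = {}" "p' \<in> nodes K"
        "nodes K' = nodes K \<union> B"
        "edges K' = edges K \<union> {(p', b) | b. b \<in> B}"
        "\<forall>b\<in>B. ttime K p' < ttime K' b" and le: "tg_le K K'"
    using assms(1) unfolding direct_emission_def by blast
  have "tg_le (glue G p q K) (glue G p q K')"
    using le B assms(2) unfolding tg_le_def glue_def by auto
  moreover have "nodes (glue G p q K') = nodes (glue G p q K) \<union> B"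
    using B unfolding glue_def by auto
  moreover have "edges (glue G p q K') = edges (glue G p q K) \<union> {(p', b) | b. b \<in> B}"
    using B unfolding glue_def by auto
  moreover have "B \<inter> nodes (glue G p q K) = {}"
    using B assms(2) unfolding glue_def by auto
  moreover have "p' \<in> nodes (glue G p q K)" using B unfolding glue_def by auto
  moreover have "\<forall>b\<in>B. ttime (glue G p q K) p' < ttime (glue G p q K') b"
    using B assms(2) unfolding glue_def by auto
  ultimately show ?thesis unfolding direct_emission_def using B by blast
qed

lemma glue_first:
  assumes "nodes K = {q}" "edges K = {}" "nodes K \<inter> nodes G = {}" "p \<in> nodes G"
    "ttime G p < ttime K q"
  shows "direct_emission G (glue G p q K)"
proof -
  have "tg_le G (glue G p q K)" unfolding tg_le_def glue_def by auto
  moreover have "nodes (glue G p q K) = nodes G \<union> {q}" using assms unfolding glue_def by auto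
  moreover have "edges (glue G p q K) = edges G \<union> {(p, b) | b. b \<in> {q}}" using assms unfolding glue_def by auto
  moreover have "\<forall>b\<in>{q}. ttime G p < ttime (glue G p q K) b" using assms unfolding glue_def by auto
  moreover have "{q} \<inter> nodes G = {}" using assms(1,3) by simp
  ultimately show ?thesis unfolding direct_emission_def using assms(4)
    by (intro conjI exI[of _ "{q}"] exI[of _ p]) simp_all
qed

lemma glue_chain:
  assumes Ks: "Ks \<in> phi {}" and hdK: "nodes (hd Ks) = {q}" and p: "p \<in> nodes G"
    and t: "ttime G p < ttime (hd Ks) q"
    and disj: "\<forall>K\<in>set Ks. nodes K \<inter> nodes G = {}" and wfG: "wf_tg G"
    and Hs: "Hs \<in> phi {}" "last Hs = G"
  shows "j < length Ks \<Longrightarrow> Hs @ map (glue G p q) (take (Suc j) Ks) \<in> phi {}"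
proof (induction j)
  case 0
  have ne: "Ks \<noteq> []" using Ks unfolding phi_def GG_def by auto
  have wfK: "\<forall>K\<in>set Ks. wf_tg K" using Ks unfolding phi_def GG_def by auto
  have tr: "trivial_tg (hd Ks)" using Ks unfolding phi_def by auto
  have "edges (hd Ks) = {}" using tr hdK unfolding trivial_tg_def by auto
  moreover have "nodes (hd Ks) \<inter> nodes G = {}" using disj ne by simp
  ultimately have de: "direct_emission G (glue G p q (hd Ks))"
    using glue_first[OF hdK _ _ p t] by blast
  have "wf_tg (glue G p q (hd Ks))" using glue_wf[OF wfG _ p] wfK ne hdK by simp
  then have "Hs @ [glue G p q (hd Ks)] \<in> phi {}" using phi_snoc[OF Hs(1)] de Hs(2) by blast
  then show ?case using ne by (simp add: take_Suc hd_conv_nth)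
next
  case (Suc j)
  have wfK: "\<forall>K\<in>set Ks. wf_tg K" using Ks unfolding phi_def GG_def by auto
  have IH: "Hs @ map (glue G p q) (take (Suc j) Ks) \<in> phi {}" using Suc by simp
  have "direct_emission (Ks!j) (Ks!Suc j)"
    using Ks Suc.prems unfolding phi_def invocation_def by auto
  moreover have "nodes (Ks!Suc j) \<inter> nodes G = {}" using disj Suc.prems by simp
  ultimately have de: "direct_emission (glue G p q (Ks!j)) (glue G p q (Ks!Suc j))"
    by (rule glue_de)
  have "q \<in> nodes (Ks!Suc j)" using phi_indeg[OF Ks hdK Suc.prems] by blast
  then have wf: "wf_tg (glue G p q (Ks!Suc j))" using glue_wf[OF wfG _ p] wfK Suc.prems by simp
  have lst: "last (Hs @ map (glue G p q) (take (Suc j) Ks)) = glue G p q (Ks!j)"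
    using Suc.prems by (simp add: last_map take_Suc_conv_app_nth)
  have "Hs @ map (glue G p q) (take (Suc j) Ks) @ [glue G p q (Ks!Suc j)] \<in> phi {}"
    using phi_snoc[OF IH wf] de lst by simp
  then show ?case using Suc.prems by (simp add: take_Suc_conv_app_nth)
qed


definition reach :: "('a,'t) tgraph \<Rightarrow> bool" where
  "reach G \<longleftrightarrow> (\<exists>Hs\<in>phi {}. last Hs = G \<and> (\<forall>H\<in>set Hs. nodes H \<subseteq> nodes G))"

lemma reach_lemma:
  assumes Gs: "Gs \<in> phi (phi {})"
  shows "k < length Gs \<Longrightarrow> reach (Gs!k)"
proof (induction k)
  case 0
  have "wf_tg (Gs!0)" "trivial_tg (Gs!0)" using Gs 0 unfolding phi_def GG_def
    by (auto simp: hd_conv_nth)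
  then have "[Gs!0] \<in> phi {}" by (rule phi_single)
  then show ?case unfolding reach_def by force
next
  case (Suc k)
  obtain Hs where Hs: "Hs \<in> phi {}" "last Hs = Gs!k" "\<forall>H\<in>set Hs. nodes H \<subseteq> nodes (Gs!k)"
    using Suc unfolding reach_def by auto
  have wfG': "wf_tg (Gs!Suc k)" using Gs Suc.prems unfolding phi_def GG_def by auto
  have wfG: "wf_tg (Gs!k)" using Gs Suc.prems unfolding phi_def GG_def by auto
  have step: "direct_emission (Gs!k) (Gs!Suc k) \<or> invocation (phi {}) (Gs!k) (Gs!Suc k)"
    using Gs Suc.prems unfolding phi_def by auto
  have sub: "nodes (Gs!k) \<subseteq> nodes (Gs!Suc k)" using step_le[OF step] unfolding tg_le_def by auto
  show ?case
  proof (cases "direct_emission (Gs!k) (Gs!Suc k)")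
    case True
    then have "Hs @ [Gs!Suc k] \<in> phi {}" using phi_snoc[OF Hs(1) wfG'] Hs(2) by simp
    then show ?thesis unfolding reach_def using Hs(3) sub
      by (intro bexI[of _ "Hs @ [Gs!Suc k]"]) auto
  next
    case False
    then have "invocation (phi {}) (Gs!k) (Gs!Suc k)" using step by simp
    then obtain p Ks q where inv: "p \<in> nodes (Gs!k)" "Ks \<in> phi {}"
        "\<forall>H\<in>set Ks. nodes H \<inter> nodes (Gs!k) = {}"
        "q \<in> nodes (last Ks)" "\<forall>x. (x, q) \<notin> edges (last Ks)"
        "nodes (Gs!Suc k) = nodes (Gs!k) \<union> nodes (last Ks)"
        "edges (Gs!Suc k) = edges (Gs!k) \<union> edges (last Ks) \<union> {(p, q)}"
        "ttime (Gs!Suc k) = (\<lambda>x. if x \<in> nodes (Gs!k) then ttime (Gs!k) x else ttime (last Ks) x)"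
        "ttype (Gs!Suc k) = (\<lambda>x. if x \<in> nodes (Gs!k) then ttype (Gs!k) x else ttype (last Ks) x)"
        "ttime (Gs!k) p < ttime (last Ks) q"
      unfolding invocation_def by blast
    have ne: "Ks \<noteq> []" using inv(2) unfolding phi_def GG_def by auto
    obtain r where r: "nodes (hd Ks) = {r}"
      using inv(2) unfolding phi_def trivial_tg_def by auto
    have lastK: "last Ks = Ks ! (length Ks - 1)" using ne by (simp add: last_conv_nth)
    have "length Ks - 1 < length Ks" using ne by simp
    note ind = phi_indeg[OF inv(2) r this, folded lastK]
    have qr: "q = r" using ind inv(4,5) by blast
    have hdq: "nodes (hd Ks) = {q}" using r qr by simp
    have le: "tg_le (Ks!0) (last Ks)" using phi_le[OF inv(2)] ne lastK by simp
    have t: "ttime (Gs!k) p < ttime (hd Ks) q"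
      using inv(10) le hdq ne unfolding tg_le_def by (simp add: hd_conv_nth)
    have "Hs @ map (glue (Gs!k) p q) (take (Suc (length Ks - 1)) Ks) \<in> phi {}"
      using glue_chain[OF inv(2) hdq inv(1) t inv(3) wfG Hs(1,2), of "length Ks - 1"] ne by simp
    then have ch: "Hs @ map (glue (Gs!k) p q) Ks \<in> phi {}" using ne by simp
    have "last (Hs @ map (glue (Gs!k) p q) Ks) = glue (Gs!k) p q (last Ks)"
      using ne by (simp add: last_map)
    also have "\<dots> = Gs!Suc k"
      using inv(6-9) unfolding glue_def by (intro tgraph.equality) simp_all
    finally have l: "last (Hs @ map (glue (Gs!k) p q) Ks) = Gs!Suc k" .
    have "\<forall>K\<in>set Ks. nodes K \<subseteq> nodes (last Ks)"
    proof
      fix K assume "K \<in> set Ks"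
      then obtain i where "i < length Ks" "K = Ks!i" by (auto simp: in_set_conv_nth)
      then show "nodes K \<subseteq> nodes (last Ks)" using phi_le[OF inv(2), of "length Ks - 1" i] lastK
        unfolding tg_le_def by simp
    qed
    then have "\<forall>H\<in>set (Hs @ map (glue (Gs!k) p q) Ks). nodes H \<subseteq> nodes (Gs!Suc k)"
      using Hs(3) sub inv(6) unfolding glue_def by fastforce
    then show ?thesis unfolding reach_def using ch l by blast
  qed
qed


lemma phi_mono: "E \<subseteq> E' \<Longrightarrow> phi E \<subseteq> phi E'"
  unfolding phi_def invocation_def by blast

lemma inv_reduce:
  assumes "invocation (phi (phi {})) G G'"
  shows "invocation (phi {}) G G'"
proof -
  obtain p Hs q where inv: "p \<in> nodes G" "Hs \<in> phi (phi {})"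
        "\<forall>H\<in>set Hs. nodes H \<inter> nodes G = {}"
        "q \<in> nodes (last Hs)" "\<forall>x. (x, q) \<notin> edges (last Hs)"
        "nodes G' = nodes G \<union> nodes (last Hs)"
        "edges G' = edges G \<union> edges (last Hs) \<union> {(p, q)}"
        "ttime G' = (\<lambda>x. if x \<in> nodes G then ttime G x else ttime (last Hs) x)"
        "ttype G' = (\<lambda>x. if x \<in> nodes G then ttype G x else ttype (last Hs) x)"
        "ttime G p < ttime (last Hs) q"
    using assms unfolding invocation_def by blast
  have ne: "Hs \<noteq> []" using inv(2) unfolding phi_def GG_def by auto
  have "reach (Hs ! (length Hs - 1))" using reach_lemma[OF inv(2)] ne by simp
  then obtain Hs' where Hs': "Hs' \<in> phi {}" "last Hs' = last Hs" "\<forall>H\<in>set Hs'. nodes H \<subseteq> nodes (last Hs)"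
    unfolding reach_def using ne by (auto simp: last_conv_nth)
  have "nodes (last Hs) \<inter> nodes G = {}" using inv(3) ne by simp
  then have "\<forall>H\<in>set Hs'. nodes H \<inter> nodes G = {}" using Hs'(3) by blast
  note dis = this
  show ?thesis unfolding invocation_def
    apply (rule exI[of _ p], rule exI[of _ Hs'], rule exI[of _ q])
    unfolding Hs'(2) using inv Hs'(1) dis by simp
qed


lemma phi_sub: "(\<And>G G'. invocation E G G' \<Longrightarrow> invocation E' G G') \<Longrightarrow> phi E \<subseteq> phi E'"
  unfolding phi_def by blast

lemma Ed0: "Ed 0 = phi {}" by (simp add: Ed_def)
lemma Ed1: "Ed 1 = phi (phi {})" by (simp add: Ed_def)
lemma Ed2: "Ed 2 = phi (phi (phi {}))" by (simp add: Ed_def numeral_2_eq_2)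
lemma EdSuc: "Ed (Suc d) = phi (Ed d)" by (simp add: Ed_def)

lemma E01: "Ed 0 \<subseteq> Ed 1"
  unfolding Ed0 Ed1 by (rule phi_mono) simp

lemma E21: "(Ed 2 :: ('a,'t) tgraph list set) = Ed 1"
proof
  show "(Ed 1 :: ('a,'t) tgraph list set) \<subseteq> Ed 2" unfolding Ed1 Ed2 by (intro phi_mono) simp
  have "phi (phi (phi {})) \<subseteq> (phi (phi {}) :: ('a,'t) tgraph list set)"
    by (rule phi_sub) (use inv_reduce in blast)
  then show "(Ed 2 :: ('a,'t) tgraph list set) \<subseteq> Ed 1" by (simp only: Ed1 Ed2)
qed

lemma Ed_const: "d \<ge> 1 \<Longrightarrow> (Ed d :: ('a,'t) tgraph list set) = Ed 1"
proof (induction d)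
  case 0 then show ?case by simp
next
  case (Suc d)
  show ?case
  proof (cases "d = 0")
    case True then show ?thesis by simp
  next
    case False
    then have "(Ed d :: ('a,'t) tgraph list set) = Ed 1" using Suc by simp
    then have "(Ed (Suc d) :: ('a,'t) tgraph list set) = phi (Ed 1)" by (simp only: EdSuc)
    also have "\<dots> = Ed 2" unfolding Ed1 Ed2 ..
    finally show ?thesis using E21 by (rule trans)
  qed
qed

lemma Einf_eq: "(Einf :: ('a,'t) tgraph list set) = Ed 1"
proof -
  have "\<forall>d. (Ed d :: ('a,'t) tgraph list set) \<subseteq> Ed 1"
  proof
    fix d show "(Ed d :: ('a,'t) tgraph list set) \<subseteq> Ed 1"
      using E01 Ed_const[of d] by (cases d) auto
  qed
  then show ?thesis unfolding Einf_def by blast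
qed


definition mkg :: "'a set \<Rightarrow> ('a \<times> 'a) set \<Rightarrow> ('a \<Rightarrow> real) \<Rightarrow> ('a,'t) tgraph" where
  "mkg S E f = \<lparr>nodes = S, edges = E, ttime = (\<lambda>x. if x \<in> S then f x else undefined),
     ttype = (\<lambda>x. undefined)\<rparr>"

lemma mkg_wf: "E \<subseteq> S \<times> S \<Longrightarrow> wf_tg (mkg S E f)"
  unfolding wf_tg_def mkg_def by auto

lemma witness:
  assumes d: "a \<noteq> b" "b \<noteq> c" "a \<noteq> c"
  defines "f \<equiv> (\<lambda>x. if x = a then 0 else if x = b then 1 else 2 :: real)"
  shows "[mkg {a} {} f, mkg {a,b,c} {(a,b),(b,c)} f] \<in> phi (phi {}) - (phi {} :: ('a,'t) tgraph list set)"
proof -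
  let ?A0 = "mkg {a} {} f :: ('a,'t) tgraph"
  let ?A2 = "mkg {a,b,c} {(a,b),(b,c)} f :: ('a,'t) tgraph"
  let ?B0 = "mkg {b} {} f :: ('a,'t) tgraph"
  let ?B1 = "mkg {b,c} {(b,c)} f :: ('a,'t) tgraph"
  have wA0: "wf_tg ?A0" "trivial_tg ?A0" by (rule mkg_wf, simp) (simp add: trivial_tg_def mkg_def)
  have wA2: "wf_tg ?A2" by (rule mkg_wf) auto
  have wB0: "wf_tg ?B0" "trivial_tg ?B0" by (rule mkg_wf, simp) (simp add: trivial_tg_def mkg_def)
  have wB1: "wf_tg ?B1" by (rule mkg_wf) auto
  have deB: "direct_emission ?B0 ?B1"
    unfolding direct_emission_def
    apply (rule conjI)
    subgoal using d unfolding tg_le_def mkg_def by auto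
    apply (rule exI[of _ "{c}"], rule exI[of _ b])
    using d unfolding mkg_def f_def by auto
  have Bs: "[?B0, ?B1] \<in> phi {}"
    using phi_snoc[OF phi_single[OF wB0] wB1] deB by simp
  have inv: "invocation (phi {}) ?A0 ?A2"
    unfolding invocation_def
    apply (rule exI[of _ a], rule exI[of _ "[?B0, ?B1]"], rule exI[of _ b])
    using Bs d unfolding mkg_def f_def by (auto intro!: ext)
  have in1: "[?A0, ?A2] \<in> phi (phi {})"
    using phi_snoc[OF phi_single[OF wA0] wA2] inv by simp
  have "\<not> direct_emission ?A0 ?A2"
  proof
    assume "direct_emission ?A0 ?A2"
    then obtain B p where "p \<in> nodes ?A0" "edges ?A2 = edges ?A0 \<union> {(p, b) | b. b \<in> B}"
      unfolding direct_emission_def by blast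
    then have "p = a" "(b,c) \<in> {(p, b) | b. b \<in> B}" unfolding mkg_def by auto
    then show False using d by auto
  qed
  moreover have "\<not> invocation {} ?A0 ?A2" unfolding invocation_def by auto
  ultimately have "[?A0, ?A2] \<notin> phi {}" unfolding phi_def by auto
  then show ?thesis using in1 by simp
qed

theorem mainTheorem7:
  assumes "infinite (UNIV :: 'a set)"
  shows "(Ed 0 :: ('a, 't::finite) tgraph list set) \<noteq> Ed 1
         \<and> (Ed 1 :: ('a, 't::finite) tgraph list set) = Einf
         \<and> (\<forall>d\<ge>1. (Ed d :: ('a, 't::finite) tgraph list set) = Ed 1)"
proof (intro conjI)
  obtain a :: 'a where True by simp
  obtain b :: 'a where b: "b \<notin> {a}" using ex_new_if_finite[OF assms, of "{a}"] by auto
  obtain c :: 'a where c: "c \<notin> {a,b}" using ex_new_if_finite[OF assms, of "{a,b}"] by auto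
  have "a \<noteq> b" "b \<noteq> c" "a \<noteq> c" using b c by auto
  from witness[OF this, where 't='t] show "(Ed 0 :: ('a, 't::finite) tgraph list set) \<noteq> Ed 1"
    unfolding Ed0 Ed1 by blast
  show "(Ed 1 :: ('a, 't::finite) tgraph list set) = Einf" by (rule Einf_eq[symmetric])
  show "\<forall>d\<ge>1. (Ed d :: ('a, 't::finite) tgraph list set) = Ed 1" using Ed_const by blast
qed

end
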